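(* Let $\mathcal{X},\mathcal{Y}$ be finite sets and $p(X,Y)$ a distribution on $\mathcal{X}\times\mathcal{Y}$ with fully supported marginals. If $q\in C(\mathcal{X}\times\mathcal{Y},\mathcal{T})$ solves the IIB problem with parameter $\lambda=D(p(X,Y)\|p(X)p(Y))$, then for all $(x,y)\in\mathcal{S}$ and $t\in\mathcal{T}$, $$q(t|x,y)=\sum_{j=1}^n q(t|\mathcal{T}^q_j)\,\delta_{(x,y)\in\mathcal{S}_j}.$$
   Context: $\mathcal{T}:=\mathbb{N}$; $C(\mathcal{A},\mathcal{B})$ is the set of channels from $\mathcal{A}$ to $\mathcal{B}$. For $\kappa\in C(\mathcal{X}\times\mathcal{Y},\mathcal{T})$ and a distribution $r$ on $\mathcal{X}\times\mathcal{Y}$, $\kappa(r)(t)=\sum_{x,y}\kappa(t|x,y)r(x,y)$; $I_\kappa(X,Y;T)$ is the mutual information under $p(x,y)\kappa(t|x,y)$; $D$ is KL divergence. IIB problem with parameter $\lambda$: minimise $I_\kappa(X,Y;T)$ over $\kappa\in C(\mathcal{X}\times\mathcal{Y},\mathcal{T})$ subject to $D(\kappa(p(X,Y))\|\kappa(p(X)p(Y)))=\lambda$. $q(t)=\sum_{x,y}p(x,y)q(t|x,y)$, $q(A)=\sum_{t\in A}q(t)$, $q(t|A)=\frac{q(t)}{q(A)}\delta_{t\in A}$. $\mathcal{S}=\operatorname{supp}p(X,Y)$; $(x,y)\sim(x',y')$ iff $\frac{p(x,y)}{p(x)p(y)}=\frac{p(x',y')}{p(x')p(y')}$, whose classes contained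 in $\mathcal{S}$ are $\mathcal{S}_1,\dots,\mathcal{S}_n$. $\mathcal{T}^q_j:=\{t\in\mathcal{T}:\exists(x,y)\in\mathcal{S}_j,\ q(t|x,y)>0\}$. *)

theory Defs
  imports "HOL-Analysis.Analysis"
begin

text \<open>Output alphabet T = nat. A distribution on X x Y is a function
  p :: 'a \<times> 'b \<Rightarrow> real on finite types; a channel from X x Y to T is a
  function kappa :: 'a \<times> 'b \<Rightarrow> nat \<Rightarrow> real (kappa z t = kappa(t|z)).\<close>

definition is_distr :: "('a::finite \<times> 'b::finite \<Rightarrow> real) \<Rightarrow> bool" where
  "is_distr p \<longleftrightarrow> (\<forall>z. p z \<ge> 0) \<and> (\<Sum>z\<in>UNIV. p z) = 1"

definition margX :: "('a::finite \<times> 'b::finite \<Rightarrow> real) \<Rightarrow> 'a \<Rightarrow> real" where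
  "margX p x = (\<Sum>y\<in>UNIV. p (x, y))"

definition margY :: "('a::finite \<times> 'b::finite \<Rightarrow> real) \<Rightarrow> 'b \<Rightarrow> real" where
  "margY p y = (\<Sum>x\<in>UNIV. p (x, y))"

definition prod_marg :: "('a::finite \<times> 'b::finite \<Rightarrow> real) \<Rightarrow> 'a \<times> 'b \<Rightarrow> real" where
  "prod_marg p z = margX p (fst z) * margY p (snd z)"

definition channel :: "('a::finite \<times> 'b::finite \<Rightarrow> nat \<Rightarrow> real) \<Rightarrow> bool" where
  "channel \<kappa> \<longleftrightarrow> (\<forall>z t. \<kappa> z t \<ge> 0) \<and> (\<forall>z. ((\<lambda>t. \<kappa> z t) has_sum 1) UNIV)"

definition push :: "('a::finite \<times> 'b::finite \<Rightarrow> nat \<Rightarrow> real) \<Rightarrow> ('a \<times> 'b \<Rightarrow> real) \<Rightarrow> nat \<Rightarrow> real" where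
  "push \<kappa> r t = (\<Sum>z\<in>UNIV. \<kappa> z t * r z)"

text \<open>KL divergence (natural log) of nonnegative functions on a countable type, as an
  extended real: +infinity if P is not absolutely continuous w.r.t. Q or the series
  diverges (its negative part is always summable for distributions); 0 log(0/q) = 0.\<close>
definition kl :: "('c \<Rightarrow> real) \<Rightarrow> ('c \<Rightarrow> real) \<Rightarrow> ereal" where
  "kl P Q = (if (\<exists>z. P z > 0 \<and> Q z = 0) then \<infinity>
             else if (\<lambda>z. P z * ln (P z / Q z)) summable_on UNIV
               then ereal (\<Sum>\<^sub>\<infinity>z. P z * ln (P z / Q z))
             else \<infinity>)"

definition mutual_info :: "('a::finite \<times> 'b::finite \<Rightarrow> real) \<Rightarrow> ('a \<times> 'b \<Rightarrow> nat \<Rightarrow> real) \<Rightarrow> ereal" where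
  "mutual_info p \<kappa> = kl (\<lambda>(z, t). p z * \<kappa> z t) (\<lambda>(z, t). p z * push \<kappa> p t)"

definition iib_solution :: "('a::finite \<times> 'b::finite \<Rightarrow> real) \<Rightarrow> ereal \<Rightarrow> ('a \<times> 'b \<Rightarrow> nat \<Rightarrow> real) \<Rightarrow> bool" where
  "iib_solution p lam q \<longleftrightarrow>
     channel q \<and> kl (push q p) (push q (prod_marg p)) = lam \<and>
     (\<forall>\<kappa>. channel \<kappa> \<and> kl (push \<kappa> p) (push \<kappa> (prod_marg p)) = lam
            \<longrightarrow> mutual_info p q \<le> mutual_info p \<kappa>)"

definition qT :: "('a::finite \<times> 'b::finite \<Rightarrow> real) \<Rightarrow> ('a \<times> 'b \<Rightarrow> nat \<Rightarrow> real) \<Rightarrow> nat \<Rightarrow> real" where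
  "qT p q t = (\<Sum>z\<in>UNIV. p z * q z t)"

definition qSet :: "('a::finite \<times> 'b::finite \<Rightarrow> real) \<Rightarrow> ('a \<times> 'b \<Rightarrow> nat \<Rightarrow> real) \<Rightarrow> nat set \<Rightarrow> real" where
  "qSet p q A = (\<Sum>\<^sub>\<infinity>t\<in>A. qT p q t)"

definition qCond :: "('a::finite \<times> 'b::finite \<Rightarrow> real) \<Rightarrow> ('a \<times> 'b \<Rightarrow> nat \<Rightarrow> real) \<Rightarrow> nat set \<Rightarrow> nat \<Rightarrow> real" where
  "qCond p q A t = (if t \<in> A then qT p q t / qSet p q A else 0)"

definition supp :: "('a::finite \<times> 'b::finite \<Rightarrow> real) \<Rightarrow> ('a \<times> 'b) set" where
  "supp p = {z. p z > 0}"

definition ratio_rel :: "('a::finite \<times> 'b::finite \<Rightarrow> real) \<Rightarrow> (('a \<times> 'b) \<times> ('a \<times> 'b)) set" where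
  "ratio_rel p = {(z, z'). p z / prod_marg p z = p z' / prod_marg p z'}"

definition supp_classes :: "('a::finite \<times> 'b::finite \<Rightarrow> real) \<Rightarrow> ('a \<times> 'b) set set" where
  "supp_classes p = {C \<in> UNIV // ratio_rel p. C \<subseteq> supp p}"

definition Tq :: "('a::finite \<times> 'b::finite \<Rightarrow> nat \<Rightarrow> real) \<Rightarrow> ('a \<times> 'b) set \<Rightarrow> nat set" where
  "Tq q C = {t. \<exists>z\<in>C. q z t > 0}"

end

theory Submission
  imports Defs
begin


lemma has_sum_sum_fin:
  fixes f :: "'i \<Rightarrow> 'x \<Rightarrow> real"
  assumes "finite I" "\<And>i. i \<in> I \<Longrightarrow> (f i has_sum s i) A"
  shows "((\<lambda>x. \<Sum>i\<in>I. f i x) has_sum (\<Sum>i\<in>I. s i)) A"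
  using assms
proof (induction I rule: finite_induct)
  case empty then show ?case by simp
next
  case (insert i I)
  have "((\<lambda>x. f i x + (\<Sum>i\<in>I. f i x)) has_sum (s i + (\<Sum>i\<in>I. s i))) A"
    by (rule has_sum_add) (use insert in auto)
  then show ?case using insert by simp
qed

lemma has_sum_diff_real:
  fixes f g :: "'x \<Rightarrow> real"
  assumes "(f has_sum a) A" "(g has_sum b) A"
  shows "((\<lambda>x. f x - g x) has_sum (a - b)) A"
proof -
  have "((\<lambda>x. - g x) has_sum (- b)) A" using assms(2) by (simp add: has_sum_uminus)
  from has_sum_add[OF assms(1) this] show ?thesis by simp
qed

lemma has_sum_prod_fin:
  fixes g :: "'z \<Rightarrow> nat \<Rightarrow> real"
  assumes "finite Z" "\<And>z. z \<in> Z \<Longrightarrow> ((\<lambda>t. g z t) has_sum s z) UNIV"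
  shows "((\<lambda>(z,t). g z t) has_sum (\<Sum>z\<in>Z. s z)) (Z \<times> UNIV)"
  using assms
proof (induction Z rule: finite_induct)
  case empty then show ?case by simp
next
  case (insert z Z)
  have 1: "((\<lambda>(z,t). g z t) has_sum s z) ({z} \<times> UNIV)"
  proof -
    have e: "{z} \<times> (UNIV::nat set) = Pair z ` UNIV" by auto
    have "(((\<lambda>(z,t). g z t) \<circ> Pair z) has_sum s z) UNIV"
      using insert by (simp add: o_def)
    then show ?thesis unfolding e by (subst has_sum_reindex) (auto intro: inj_onI)
  qed
  have "((\<lambda>(z,t). g z t) has_sum (s z + (\<Sum>z\<in>Z. s z))) ({z} \<times> UNIV \<union> Z \<times> UNIV)"
    by (rule has_sum_Un_disjoint[OF 1]) (use insert in auto)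
  moreover have "{z} \<times> UNIV \<union> Z \<times> UNIV = insert z Z \<times> (UNIV::nat set)" by auto
  ultimately show ?case using insert by simp
qed

lemma has_sum_prod_univ:
  fixes g :: "'z::finite \<Rightarrow> nat \<Rightarrow> real"
  assumes "\<And>z. ((\<lambda>t. g z t) has_sum s z) UNIV"
  shows "((\<lambda>(z,t). g z t) has_sum (\<Sum>z\<in>UNIV. s z)) UNIV"
  using has_sum_prod_fin[of UNIV g s] assms by simp

lemma gibbs_t:
  fixes p Q w :: "'z::finite \<Rightarrow> real"
  assumes Qp: "\<And>z. Q z > 0" and pn: "\<And>z. p z \<ge> 0" and wn: "\<And>z. w z \<ge> 0"
  defines "a \<equiv> \<Sum>z\<in>UNIV. w z * p z"
  defines "b \<equiv> \<Sum>z\<in>UNIV. w z * Q z"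
  shows "(\<Sum>z\<in>UNIV. w z * p z * ln (p z / Q z)) \<ge> a * ln (a / b)
    \<and> ((\<Sum>z\<in>UNIV. w z * p z * ln (p z / Q z)) = a * ln (a / b) \<longrightarrow>
        (\<forall>z. w z > 0 \<longrightarrow> p z / Q z = a / b))"
proof (cases "a = 0")
  case True
  have wp0: "w z * p z = 0" for z
    using True unfolding a_def
    by (subst (asm) sum_nonneg_eq_0_iff) (auto intro: mult_nonneg_nonneg wn pn)
  have "p z = 0" if "w z > 0" for z using wp0[of z] that by simp
  moreover have "(\<Sum>z\<in>UNIV. w z * p z * ln (p z / Q z)) = 0" by (simp add: wp0)
  ultimately show ?thesis using True by auto
next
  case False
  have a0: "a > 0" using False unfolding a_def
    by (metis (no_types, lifting) order_le_less sum_nonneg mult_nonneg_nonneg wn pn)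
  obtain z0 where "w z0 * p z0 \<noteq> 0"
    using False unfolding a_def by (meson sum.neutral)
  then have w0: "w z0 > 0" using wn[of z0] by (simp add: order_le_less) 
  have "w z0 * Q z0 \<le> b" unfolding b_def
    by (rule member_le_sum) (auto intro: mult_nonneg_nonneg wn less_imp_le[OF Qp])
  moreover have "w z0 * Q z0 > 0" using w0 Qp by simp
  ultimately have b0: "b > 0" by linarith
  define c where "c = a / b"
  have c0: "c > 0" using a0 b0 by (simp add: c_def)
  define d where "d z = w z * p z * ln (p z / Q z) - w z * p z * ln c - (w z * p z - c * w z * Q z)" for z
  have dn: "d z \<ge> 0" for z
  proof (cases "w z > 0 \<and> p z > 0")
    case True
    have "ln (c / (p z / Q z)) \<le> c / (p z / Q z) - 1"
      using True c0 Qp[of z] by (intro ln_le_minus_one) simp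
    moreover have "ln (c / (p z / Q z)) = ln c - ln (p z / Q z)"
      using True c0 Qp[of z] by (simp add: ln_div ln_mult)
    ultimately have "ln c - ln (p z / Q z) \<le> c * Q z / p z - 1" by simp
    then have "w z * p z * (ln c - ln (p z / Q z)) \<le> w z * p z * (c * Q z / p z - 1)"
      using True by (intro mult_left_mono) auto
    then show ?thesis using True unfolding d_def by (simp add: algebra_simps)
  next
    case False
    then have "w z * p z = 0" using wn[of z] pn[of z] by (auto simp: order_le_less)
    then have "d z = c * w z * Q z" unfolding d_def by (metis (no_types) mult_zero_left diff_zero diff_0 minus_diff_eq mult.commute)
    then show ?thesis using c0 wn[of z] Qp[of z] by simp
  qed
  have sd: "(\<Sum>z\<in>UNIV. d z) = (\<Sum>z\<in>UNIV. w z * p z * ln (p z / Q z)) - a * ln c - (a - c * b)"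
    unfolding d_def a_def b_def by (simp add: sum_subtractf sum.distrib sum_distrib_left sum_distrib_right algebra_simps)
  have cb: "c * b = a" using b0 by (simp add: c_def)
  have "(\<Sum>z\<in>UNIV. d z) \<ge> 0" by (intro sum_nonneg dn)
  then have ineq: "(\<Sum>z\<in>UNIV. w z * p z * ln (p z / Q z)) \<ge> a * ln (a / b)"
    using sd cb by (simp add: c_def)
  have eq: "p z / Q z = a / b" if E: "(\<Sum>z\<in>UNIV. w z * p z * ln (p z / Q z)) = a * ln (a / b)"
    and wz: "w z > 0" for z
  proof -
    have "(\<Sum>z\<in>UNIV. d z) = 0" using sd cb E by (simp add: c_def)
    then have dz: "d z = 0" using dn by (subst (asm) sum_nonneg_eq_0_iff) auto
    show ?thesis
    proof (cases "p z > 0")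
      case False
      then have "p z = 0" using pn[of z] by simp
      then have "d z = c * w z * Q z" unfolding d_def by simp
      moreover have "c * w z * Q z > 0" using c0 wz Qp[of z] by simp
      ultimately show ?thesis using dz by linarith
    next
      case True
      define r where "r = c / (p z / Q z)"
      have r0: "r > 0" using True c0 Qp[of z] by (simp add: r_def)
      have B: "ln c = ln r + ln (p z / Q z)"
        using True c0 Qp[of z] by (simp add: ln_div ln_mult r_def)
      have A: "c * w z * Q z = w z * p z * r" using True by (simp add: r_def field_simps)
      have "d z = w z * p z * (r - 1 - ln r)" unfolding d_def A B
        by (simp add: algebra_simps)
      then have "r - 1 - ln r = 0" using dz wz True by simp
      then have "r = 1" using ln_eq_minus_one[OF r0] by simp
      then show ?thesis using True Qp[of z] b0 by (simp add: r_def c_def field_simps)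
    qed
  qed
  show ?thesis using ineq eq by blast
qed

lemma H_ineq:
  fixes P k a x :: real
  assumes "P > 0" "k > 0" "a > 0" "x \<ge> 0"
  defines "y \<equiv> a / k"
  defines "H \<equiv> P*x*ln(P*x/(P*a)) - P*y*ln(P*y/(P*a)) - P*(ln(1/k)+1)*(x-y)"
  shows "H \<ge> 0 \<and> (H = 0 \<longrightarrow> x = y)"
proof -
  have y0: "y > 0" using assms by (simp add: y_def)
  have l1: "P*y/(P*a) = 1/k" using assms by (simp add: y_def)
  show ?thesis
  proof (cases "x = 0")
    case True
    then have "H = P * y" unfolding H_def l1 by (simp add: algebra_simps)
    then show ?thesis using y0 assms True by simp
  next
    case False
    then have x0: "x > 0" using assms by simp
    have "P*x/(P*a) = x/a" using assms by simp
    then have L1: "ln (P*x/(P*a)) = ln x - ln a" using x0 assms by (simp add: ln_div)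
    have L2: "ln (1/k) = - ln k" using assms by (simp add: ln_div)
    have lxy: "ln (x/y) = ln x - ln a + ln k" using x0 assms
      by (simp add: y_def ln_div ln_mult)
    have "H = P*x*(ln x - ln a) - P*y*(- ln k) - P*(- ln k + 1)*(x-y)"
      by (simp only: H_def l1 L1 L2)
    also have "\<dots> = P * (x * (ln x - ln a + ln k) - x + y)" by (simp add: algebra_simps)
    finally have "H = P * (x * ln (x/y) - x + y)" by (simp only: lxy)
    moreover have "ln (y/x) = - ln (x/y)" using x0 y0 by (simp add: ln_div)
    ultimately have Hr: "H = P * x * ((y/x) - 1 - ln (y/x))" using x0
      by (simp add: algebra_simps)
    have "ln (y/x) \<le> y/x - 1" using x0 y0 by (intro ln_le_minus_one) simp
    then have "H \<ge> 0" unfolding Hr using assms x0 by simp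
    moreover have "x = y" if "H = 0"
    proof -
      have "y/x - 1 - ln (y/x) = 0" using that Hr assms x0 by simp
      then have "y/x = 1" using ln_eq_minus_one[of "y/x"] x0 y0 by simp
      then show ?thesis using x0 by simp
    qed
    ultimately show ?thesis by blast
  qed
qed


theorem lemma13:
  fixes p :: "'a::finite \<times> 'b::finite \<Rightarrow> real"
    and q :: "'a \<times> 'b \<Rightarrow> nat \<Rightarrow> real"
  assumes "is_distr p"
    and "\<forall>x. margX p x > 0"
    and "\<forall>y. margY p y > 0"
    and "iib_solution p (kl p (prod_marg p)) q"
  shows "\<forall>z \<in> supp p. \<forall>t::nat.
           q z t = (\<Sum>C\<in>supp_classes p. qCond p q (Tq q C) t * (if z \<in> C then 1 else 0))"
proof -
  define Q where "Q = prod_marg p"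
  define R where "R z = p z / Q z" for z
  define a where "a = push q p"
  define b where "b = push q Q"
  have pn: "\<And>z. p z \<ge> 0" using assms(1) unfolding is_distr_def by (metis surj_pair)
  have Qp: "\<And>z. Q z > 0" using assms(2,3) by (simp add: Q_def prod_marg_def)
  have Rpos: "R z > 0 \<longleftrightarrow> p z > 0" for z
    using Qp[of z] pn[of z] by (auto simp add: R_def zero_less_divide_iff)
  have iib: "iib_solution p (kl p Q) q" using assms(4) by (simp add: Q_def)
  have ch: "channel q" and cons: "kl (push q p) (push q Q) = kl p Q"
   and opt: "\<And>\<kappa>. channel \<kappa> \<Longrightarrow> kl (push \<kappa> p) (push \<kappa> Q) = kl p Q
              \<Longrightarrow> mutual_info p q \<le> mutual_info p \<kappa>"
    using iib unfolding iib_solution_def Q_def by auto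
  have qn: "\<And>z t. q z t \<ge> 0" and qs: "\<And>z. ((\<lambda>t. q z t) has_sum 1) UNIV"
    using ch unfolding channel_def by auto
  have qsc: "((\<lambda>t. q z t * c) has_sum c) UNIV" for z c
    using has_sum_cmult_left[OF qs, of z c] by simp
  have a_eq: "a t = (\<Sum>z\<in>UNIV. q z t * p z)" for t by (simp add: a_def push_def)
  have b_eq: "b t = (\<Sum>z\<in>UNIV. q z t * Q z)" for t by (simp add: b_def push_def)
  have a_nn: "a t \<ge> 0" for t unfolding a_eq by (intro sum_nonneg mult_nonneg_nonneg qn pn)
  have a_ge: "q z t * p z \<le> a t" for z t unfolding a_eq
    by (rule member_le_sum) (auto intro: mult_nonneg_nonneg qn pn)
  define D where "D = (\<Sum>z\<in>UNIV. p z * ln (p z / Q z))"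
  have klpQ: "kl p Q = ereal D"
    using Qp unfolding kl_def D_def by (auto simp: less_le)
  \<comment> \<open>Step 1: data processing equality\<close>
  define h where "h t = a t * ln (a t / b t)" for t
  have hs: "(h has_sum D) UNIV"
  proof -
    have "kl (push q p) (push q Q) = ereal D" using cons klpQ by simp
    then have "h summable_on UNIV \<and> infsum h UNIV = D"
      unfolding kl_def h_def a_def b_def by (auto split: if_splits)
    then show ?thesis using has_sum_iff by blast
  qed
  define g where "g t = (\<Sum>z\<in>UNIV. q z t * p z * ln (p z / Q z))" for t
  have gs: "(g has_sum D) UNIV"
  proof -
    have "((\<lambda>t. \<Sum>z\<in>UNIV. q z t * (p z * ln (p z / Q z))) has_sum
          (\<Sum>z\<in>UNIV. 1 * (p z * ln (p z / Q z)))) UNIV"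
      by (rule has_sum_sum_fin) (simp_all add: qsc)
    moreover have "g = (\<lambda>t. \<Sum>z\<in>UNIV. q z t * (p z * ln (p z / Q z)))"
      by (simp add: fun_eq_iff g_def mult.assoc)
    ultimately show ?thesis by (simp add: D_def)
  qed
  have gibbs: "g t \<ge> h t \<and> (g t = h t \<longrightarrow> (\<forall>z. q z t > 0 \<longrightarrow> R z = a t / b t))" for t
    using gibbs_t[of Q p "\<lambda>z. q z t", OF Qp pn qn]
    unfolding g_def h_def a_eq b_eq R_def by simp
  have gh0: "g t - h t = 0" for t
  proof -
    have "((\<lambda>t. g t - h t) has_sum 0) UNIV" using has_sum_diff_real[OF gs hs] by simp
    from nonneg_has_sum_le_0D[OF this] show ?thesis using gibbs by auto
  qed
  have KEY1: "q z t > 0 \<Longrightarrow> R z = a t / b t" for z t using gibbs[of t] gh0[of t] by (metis eq_iff_diff_eq_0)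
  have KEY2: "q z t > 0 \<Longrightarrow> q z' t > 0 \<Longrightarrow> R z = R z'" for z z' t
    using KEY1 by metis
  define cls where "cls z = {z'. R z' = R z}" for z
  define T where "T z = Tq q (cls z)" for z
  define k where "k z = (\<Sum>z'\<in>cls z. p z')" for z
  have T_iff: "t \<in> T z \<longleftrightarrow> (\<exists>z'. R z' = R z \<and> q z' t > 0)" for z t
    by (auto simp: T_def Tq_def cls_def)
  have notT: "t \<notin> T z \<Longrightarrow> q z t = 0" for z t
    using qn[of z t] T_iff[of t z] by (metis less_eq_real_def)
  have a_posT: "p z > 0 \<Longrightarrow> t \<in> T z \<Longrightarrow> a t > 0" for z t
  proof -
    assume pz: "p z > 0" and tT: "t \<in> T z"
    then obtain z' where z': "R z' = R z" "q z' t > 0" using T_iff by blast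
    then have "p z' > 0" using Rpos pz by metis
    then have "q z' t * p z' > 0" using z' by simp
    then show "a t > 0" using a_ge[of z' t] by linarith
  qed
  have qT_a: "qT p q t = a t" for t by (simp add: qT_def a_eq mult.commute)
  have k_pos: "p z > 0 \<Longrightarrow> k z > 0" for z
  proof -
    assume pz: "p z > 0"
    have "p z \<le> k z" unfolding k_def by (rule member_le_sum) (auto simp: cls_def pn)
    then show ?thesis using pz by linarith
  qed
  have kT: "((\<lambda>t. qT p q t) has_sum k z) (T z)" if pz: "p z > 0" for z
  proof -
    have 1: "((\<lambda>t. \<Sum>z'\<in>cls z. q z' t * p z') has_sum (\<Sum>z'\<in>cls z. p z')) UNIV"
      by (rule has_sum_sum_fin) (simp_all add: qsc)
    have "((\<lambda>t. \<Sum>z'\<in>cls z. q z' t * p z') has_sum k z) UNIV \<longleftrightarrow> ((\<lambda>t. qT p q t) has_sum k z) (T z)"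
    proof (rule has_sum_cong_neutral)
      fix t assume "t \<in> UNIV - T z"
      then have "q z' t = 0" if "z' \<in> cls z" for z'
        using that qn[of z' t] by (auto simp: T_def Tq_def less_le)
      then show "(\<Sum>z'\<in>cls z. q z' t * p z') = 0" by simp
    next
      fix t assume tT: "t \<in> UNIV \<inter> T z"
      have "(\<Sum>z'\<in>cls z. q z' t * p z') = (\<Sum>z'\<in>UNIV. q z' t * p z')"
      proof (rule sum.mono_neutral_left)
        show "\<forall>i\<in>UNIV - cls z. q i t * p i = 0"
        proof
          fix i assume i: "i \<in> UNIV - cls z"
          have "q i t = 0"
          proof (rule ccontr)
            assume "q i t \<noteq> 0"
            then have qi: "q i t > 0" using qn[of i t] by simp
            obtain z' where "R z' = R z" "q z' t > 0" using tT T_iff by blast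
            then have "R i = R z" using KEY2[OF qi] by metis
            then show False using i by (simp add: cls_def)
          qed
          then show "q i t * p i = 0" by simp
        qed
      qed auto
      then show "(\<Sum>z'\<in>cls z. q z' t * p z') = qT p q t" by (simp add: qT_a a_eq)
    qed auto
    then show ?thesis using 1 by (simp add: k_def)
  qed
  have qSet_k: "p z > 0 \<Longrightarrow> qSet p q (T z) = k z" for z
    using kT unfolding qSet_def by (simp add: infsumI)
  define qq where "qq z t = (if p z > 0 then qCond p q (T z) t else q z t)" for z t
  have qq_S: "p z > 0 \<Longrightarrow> qq z t = (if t \<in> T z then a t / k z else 0)" for z t
    by (simp add: qq_def qCond_def qSet_k qT_a)
  have qq_nS: "\<not> p z > 0 \<Longrightarrow> qq z t = q z t" for z t by (simp add: qq_def)
  have qqn: "qq z t \<ge> 0" for z t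
    using qq_S[of z t] qq_nS[of z t] qn[of z t] a_nn[of t] k_pos[of z]
    by (cases "p z > 0"; cases "t \<in> T z") simp_all
  have qqs: "((\<lambda>t. qq z t) has_sum 1) UNIV" for z
  proof (cases "p z > 0")
    case True
    have "((\<lambda>t. qT p q t * (1 / k z)) has_sum (k z * (1 / k z))) (T z)"
      by (rule has_sum_cmult_left[OF kT[OF True]])
    then have 1: "((\<lambda>t. qT p q t * (1 / k z)) has_sum 1) (T z)" using k_pos[OF True] by simp
    have "((\<lambda>t. qT p q t * (1 / k z)) has_sum 1) (T z) \<longleftrightarrow> ((\<lambda>t. qq z t) has_sum 1) UNIV"
      by (rule has_sum_cong_neutral) (auto simp: qq_S[OF True] qT_a)
    then show ?thesis using 1 by simp
  next
    case False
    then show ?thesis using qs[of z] by (simp add: qq_nS)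
  qed
  have ch_qq: "channel qq" unfolding channel_def using qqn qqs by auto
  have push_eq: "push qq p t = push q p t \<and> push qq Q t = push q Q t" for t
  proof (cases "\<exists>z0. p z0 > 0 \<and> q z0 t > 0")
    case True
    then obtain z0 where z0: "p z0 > 0" "q z0 t > 0" by blast
    have R0: "R z0 > 0" using z0 Rpos by simp
    have qqA: "qq z t = (if z \<in> cls z0 then a t / k z0 else 0)" for z
    proof (cases "p z > 0")
      case True
      have "t \<in> T z \<longleftrightarrow> R z = R z0"
      proof
        assume "t \<in> T z"
        then obtain z' where "R z' = R z" "q z' t > 0" using T_iff by blast
        then show "R z = R z0" using KEY2[of z' t z0] z0(2) by simp
      next
        assume "R z = R z0"
        then have "\<exists>z'. R z' = R z \<and> q z' t > 0" using z0(2) by (intro exI[of _ z0]) simp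
        then show "t \<in> T z" using T_iff[of t z] by simp
      qed
      moreover have "R z = R z0 \<Longrightarrow> k z = k z0" by (simp add: k_def cls_def)
      ultimately show ?thesis using qq_S[OF True, of t] by (auto simp: cls_def)
    next
      case False
      then have "R z \<noteq> R z0" using Rpos[of z] R0 by auto
      moreover have "q z t = 0"
      proof (rule ccontr)
        assume "q z t \<noteq> 0"
        then have "q z t > 0" using qn[of z t] by simp
        then show False using KEY2[OF _ z0(2), of z] \<open>R z \<noteq> R z0\<close> by simp
      qed
      ultimately show ?thesis using qq_nS[OF False] by (simp add: cls_def)
    qed
    have sumcls: "(\<Sum>z\<in>UNIV. qq z t * w z) = a t / k z0 * (\<Sum>z\<in>cls z0. w z)" for w
    proof -
      have "(\<Sum>z\<in>UNIV. qq z t * w z) = (\<Sum>z\<in>UNIV. if z \<in> cls z0 then a t / k z0 * w z else 0)"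
        by (rule sum.cong) (auto simp: qqA)
      also have "\<dots> = (\<Sum>z\<in>cls z0. a t / k z0 * w z)"
        by (simp add: sum.inter_restrict[symmetric])
      finally show ?thesis by (simp add: sum_distrib_left)
    qed
    have k0: "k z0 > 0" using k_pos z0 by simp
    have e1: "push qq p t = a t"
      using sumcls[of p] k0 by (simp add: push_def k_def)
    have Qcls: "Q z = p z / R z0" if "z \<in> cls z0" for z
      using that Qp[of z] R0 by (auto simp: cls_def R_def field_simps)
    have "(\<Sum>z\<in>cls z0. Q z) = k z0 / R z0"
      by (simp add: Qcls k_def sum_divide_distrib)
    then have e2: "push qq Q t = a t / R z0"
      using sumcls[of Q] k0 by (simp add: push_def)
    have "push q Q t = (\<Sum>z\<in>UNIV. q z t * p z / R z0)"
      unfolding push_def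
    proof (rule sum.cong[OF refl])
      fix z :: "'a \<times> 'b" assume "z \<in> UNIV"
      show "q z t * Q z = q z t * p z / R z0"
      proof (cases "q z t > 0")
        case True
        then have "z \<in> cls z0" using KEY2[OF True z0(2)] by (simp add: cls_def)
        then show ?thesis using Qcls by simp
      next
        case False
        then have "q z t = 0" using qn[of z t] by simp
        then show ?thesis by simp
      qed
    qed
    also have "\<dots> = a t / R z0" by (simp add: a_eq sum_divide_distrib)
    finally show ?thesis using e1 e2 by (simp add: a_def)
  next
    case False
    have "qq z t = q z t" for z
    proof (cases "p z > 0")
      case True
      then have "\<not> q z t > 0" using False by blast
      then have "q z t = 0" using qn[of z t] by simp
      have "t \<notin> T z"
      proof
        assume "t \<in> T z"
        then obtain z' where "R z' = R z" "q z' t > 0" using T_iff by blast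
        moreover have "p z' > 0" using Rpos[of z'] Rpos[of z] True \<open>R z' = R z\<close> by simp
        ultimately show False using False by blast
      qed
      then show ?thesis using qq_S[OF True] \<open>q z t = 0\<close> by simp
    qed (simp add: qq_nS)
    then show ?thesis by (simp add: push_def)
  qed
  have push_p: "push qq p = push q p" and push_Q: "push qq Q = push q Q"
    using push_eq by auto
  have cons_qq: "kl (push qq p) (push qq Q) = kl p Q" using cons by (simp add: push_p push_Q)
  have MIle: "mutual_info p q \<le> mutual_info p qq" by (rule opt[OF ch_qq cons_qq])
  define PF where "PF = (\<lambda>(z,t). p z * q z t)"
  define PF' where "PF' = (\<lambda>(z,t). p z * qq z t)"
  define QF where "QF = (\<lambda>(z::'a\<times>'b,t). p z * a t)"
  define F where "F w = PF w * ln (PF w / QF w)" for w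
  define F' where "F' w = PF' w * ln (PF' w / QF w)" for w
  have MIq: "mutual_info p q = kl PF QF" by (simp add: mutual_info_def PF_def QF_def a_def)
  have MIqq: "mutual_info p qq = kl PF' QF"
    by (simp add: mutual_info_def PF'_def QF_def a_def push_p)
  have pos_split: "p z * x > 0 \<Longrightarrow> x \<ge> 0 \<Longrightarrow> p z > 0 \<and> x > 0" for z and x :: real
    using pn[of z] by (auto simp: zero_less_mult_iff)
  have nb: "\<not> (\<exists>w. PF w > 0 \<and> QF w = 0)"
  proof
    assume "\<exists>w. PF w > 0 \<and> QF w = 0"
    then obtain z t where 1: "p z * q z t > 0" "p z * a t = 0" by (auto simp: PF_def QF_def)
    then have 2: "p z > 0" "q z t > 0" using pos_split[OF 1(1) qn] by auto
    then have "a t > 0" using a_ge[of z t] by (smt (verit) mult_pos_pos)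
    then show False using 1 2 by simp
  qed
  have nb': "\<not> (\<exists>w. PF' w > 0 \<and> QF w = 0)"
  proof
    assume "\<exists>w. PF' w > 0 \<and> QF w = 0"
    then obtain z t where 1: "p z * qq z t > 0" "p z * a t = 0" by (auto simp: PF'_def QF_def)
    then have 2: "p z > 0" "qq z t > 0" using pos_split[OF 1(1) qqn] by auto
    then have "t \<in> T z" using qq_S[of z t] by (auto split: if_splits)
    then have "a t > 0" using a_posT 2 by simp
    then show False using 1 2 by simp
  qed
  define g' where "g' z t = p z * ln (1 / k z) * qq z t" for z t
  have F'_eq: "F' (z,t) = g' z t" for z t
  proof (cases "p z > 0")
    case True
    show ?thesis
    proof (cases "t \<in> T z")
      case True2: True
      have at: "a t > 0" using a_posT True True2 by simp
      have kz: "k z > 0" using k_pos True by simp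
      have "p z * (a t / k z) / (p z * a t) = 1 / k z" using True at kz by (simp add: field_simps)
      then show ?thesis using True True2
        by (simp add: F'_def PF'_def QF_def g'_def qq_S mult_ac)
    next
      case False
      then show ?thesis using True by (simp add: F'_def PF'_def QF_def g'_def qq_S)
    qed
  next
    case False
    then have "p z = 0" using pn[of z] by simp
    then show ?thesis by (simp add: F'_def PF'_def QF_def g'_def)
  qed
  define M' where "M' = (\<Sum>z\<in>UNIV. p z * ln (1 / k z) * 1)"
  have F's: "(F' has_sum M') UNIV"
  proof -
    have "((\<lambda>(z,t). g' z t) has_sum M') UNIV" unfolding M'_def g'_def
      by (rule has_sum_prod_univ) (rule has_sum_cmult_right[OF qqs])
    moreover have "F' = (\<lambda>(z,t). g' z t)" by (auto simp: fun_eq_iff F'_eq)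
    ultimately show ?thesis by simp
  qed
  have MIqq_val: "mutual_info p qq = ereal M'"
  proof -
    have "(\<lambda>w. PF' w * ln (PF' w / QF w)) = F'" by (simp add: fun_eq_iff F'_def)
    then show ?thesis unfolding MIqq kl_def using nb' F's by (auto simp: has_sum_iff)
  qed
  have MIq_val: "mutual_info p q = (if F summable_on UNIV then ereal (infsum F UNIV) else \<infinity>)"
  proof -
    have "(\<lambda>w. PF w * ln (PF w / QF w)) = F" by (simp add: fun_eq_iff F_def)
    then show ?thesis unfolding MIq kl_def using nb by (simp only: if_False)
  qed
  have Fsum: "F summable_on UNIV" and Fle: "infsum F UNIV \<le> M'"
    using MIle unfolding MIqq_val MIq_val by (auto split: if_splits)
  define e where "e z t = p z * (ln (1 / k z) + 1) * (q z t - qq z t)" for z t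
  have es: "((\<lambda>(z,t). e z t) has_sum 0) UNIV"
  proof -
    have "((\<lambda>(z,t). e z t) has_sum (\<Sum>z\<in>UNIV. p z * (ln (1 / k z) + 1) * (1 - 1))) UNIV"
      unfolding e_def
      by (rule has_sum_prod_univ) (rule has_sum_cmult_right[OF has_sum_diff_real[OF qs qqs]])
    then show ?thesis by simp
  qed
  define Hf where "Hf w = F w - F' w - (\<lambda>(z,t). e z t) w" for w
  have Hs: "(Hf has_sum (infsum F UNIV - M' - 0)) UNIV"
    unfolding Hf_def
    by (intro has_sum_diff_real es F's) (use Fsum in simp)
  have Hpt: "Hf (z,t) \<ge> 0 \<and> (Hf (z,t) = 0 \<longrightarrow> p z > 0 \<longrightarrow> q z t = qq z t)" for z t
  proof (cases "p z > 0")
    case True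
    show ?thesis
    proof (cases "t \<in> T z")
      case True2: True
      have at: "a t > 0" using a_posT True True2 by simp
      have kz: "k z > 0" using k_pos True by simp
      have "Hf (z,t) = p z * q z t * ln (p z * q z t / (p z * a t))
         - p z * (a t / k z) * ln (p z * (a t / k z) / (p z * a t))
         - p z * (ln (1 / k z) + 1) * (q z t - a t / k z)"
        using True True2 by (simp add: Hf_def F_def F'_def PF_def PF'_def QF_def e_def qq_S)
      then show ?thesis using H_ineq[OF True kz at qn[of z t]] True True2 qq_S[OF True, of t]
        by simp
    next
      case False
      then have "q z t = 0" "qq z t = 0" using notT qq_S[OF True, of t] by auto
      then show ?thesis by (simp add: Hf_def F_def F'_def PF_def PF'_def QF_def e_def)
    qed
  next
    case False
    then have "p z = 0" using pn[of z] by simp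
    then show ?thesis by (simp add: Hf_def F_def F'_def PF_def PF'_def QF_def e_def)
  qed
  have Hzero: "Hf w = 0" for w
  proof -
    have "infsum F UNIV - M' - 0 \<le> 0" using Fle by simp
    from nonneg_has_sum_le_0D[OF Hs this] show ?thesis using Hpt by (metis UNIV_I surj_pair)
  qed
  have main: "p z > 0 \<Longrightarrow> q z t = qCond p q (T z) t" for z t
    using Hpt[of z t] Hzero[of "(z,t)"] by (simp add: qq_def)
  have rr: "ratio_rel p `` {z} = cls z" for z
  proof (rule set_eqI)
    fix z' show "z' \<in> ratio_rel p `` {z} \<longleftrightarrow> z' \<in> cls z"
      unfolding Image_singleton_iff ratio_rel_def cls_def R_def Q_def
      by (simp only: mem_Collect_eq case_prod_conv) (rule eq_commute)
  qed
  show ?thesis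
  proof (intro ballI allI)
    fix z t assume zS: "z \<in> supp p"
    then have pz: "p z > 0" by (simp add: supp_def)
    have cS: "cls z \<in> supp_classes p"
    proof -
      have "cls z \<in> UNIV // ratio_rel p" using quotientI[of z UNIV "ratio_rel p"] rr by simp
      moreover have "cls z \<subseteq> supp p"
      proof
        fix z' assume "z' \<in> cls z"
        then have "R z' = R z" by (simp add: cls_def)
        then have "R z' > 0" using Rpos[of z] pz by simp
        then show "z' \<in> supp p" using Rpos[of z'] by (simp add: supp_def)
      qed
      ultimately show ?thesis by (simp add: supp_classes_def)
    qed
    have uniq: "C = cls z" if CS: "C \<in> supp_classes p" and zC: "z \<in> C" for C
    proof -
      have "C \<in> UNIV // ratio_rel p" using CS by (simp add: supp_classes_def)
      then obtain z0 where "C = ratio_rel p `` {z0}" by (rule quotientE)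
      then have "C = cls z0" using rr by simp
      then have "R z = R z0" using zC by (simp add: cls_def)
      then show "C = cls z" using \<open>C = cls z0\<close> by (simp add: cls_def)
    qed
    have fin: "finite (supp_classes p)" by (rule finite_subset[OF subset_UNIV]) simp
    have "(\<Sum>C\<in>supp_classes p. qCond p q (Tq q C) t * (if z \<in> C then 1 else 0))
        = (\<Sum>C\<in>supp_classes p. if C = cls z then qCond p q (Tq q C) t else 0)"
    proof (rule sum.cong[OF refl])
      fix C assume C: "C \<in> supp_classes p"
      show "qCond p q (Tq q C) t * (if z \<in> C then 1 else 0) = (if C = cls z then qCond p q (Tq q C) t else 0)"
      proof (cases "z \<in> C")
        case True
        then show ?thesis using uniq[OF C True] by simp
      next
        case False
        have "z \<in> cls z" by (simp add: cls_def)
        then have "C \<noteq> cls z" using False by blast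
        then show ?thesis using False by simp
      qed
    qed
    also have "\<dots> = qCond p q (Tq q (cls z)) t" using cS fin by (simp add: sum.delta)
    finally show "q z t = (\<Sum>C\<in>supp_classes p. qCond p q (Tq q C) t * (if z \<in> C then 1 else 0))"
      using main[OF pz, of t] by (simp add: T_def)
  qed
qed

end
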